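(* Fix $0<\epsilon<1$ and let $\lambda_n=\frac{1-\epsilon}{n}$. Then there exists a constant $\kappa'>0$ such that, with probability tending to $1$ as $n\to\infty$, every component of the random induced subgraph $\Gamma_n$ of $Q_2^n$ has at most $\kappa' n$ vertices.
   Context: $Q_2^n$ is the binary $n$-cube: vertex set $\mathbb{F}_2^n$, two vertices adjacent iff they differ in exactly one coordinate. $\Gamma_n$ is the subgraph of $Q_2^n$ induced by a random vertex set in which each vertex is included independently with probability $\lambda_n$. A component is a maximal connected induced subgraph. *)

theory Defs
  imports "HOL-Probability.Probability"
begin

definition cube :: "nat \<Rightarrow> bool list set" where
  "cube n = {x. length x = n}"

definition cube_adj :: "nat \<Rightarrow> bool list \<Rightarrow> bool list \<Rightarrow> bool" where
  "cube_adj n x y \<longleftrightarrow> x \<in> cube n \<and> y \<in> cube n \<and> card {i. i < n \<and> x ! i \<noteq> y ! i} = 1"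

definition induced_adj :: "nat \<Rightarrow> bool list set \<Rightarrow> bool list \<Rightarrow> bool list \<Rightarrow> bool" where
  "induced_adj n S x y \<longleftrightarrow> x \<in> S \<and> y \<in> S \<and> cube_adj n x y"

definition component :: "nat \<Rightarrow> bool list set \<Rightarrow> bool list \<Rightarrow> bool list set" where
  "component n S x = {y. (induced_adj n S)\<^sup>*\<^sup>* x y}"

definition components_bounded :: "nat \<Rightarrow> bool list set \<Rightarrow> real \<Rightarrow> bool" where
  "components_bounded n S b \<longleftrightarrow> (\<forall>x\<in>S. real (card (component n S x)) \<le> b)"

definition random_vertex_set :: "nat \<Rightarrow> real \<Rightarrow> bool list set pmf" where
  "random_vertex_set n p =
     map_pmf (\<lambda>f. {x \<in> cube n. f x}) (Pi_pmf (cube n) False (\<lambda>_. bernoulli_pmf p))"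

end

theory Submission imports Defs "HOL-Real_Asymp.Real_Asymp" begin

type_synonym st = "bool list list \<times> bool list set \<times> bool list"

definition flip :: "bool list \<Rightarrow> nat \<Rightarrow> bool list" where "flip x i = x[i := \<not> x!i]"
definition nbs :: "nat \<Rightarrow> bool list \<Rightarrow> bool list list" where "nbs n x = map (flip x) [0..<n]"

definition step :: "nat \<Rightarrow> bool list set \<Rightarrow> st \<Rightarrow> st" where
 "step n S = (\<lambda>(stk, seen, ans). case dropWhile (\<lambda>y. y \<in> seen) stk of
     [] \<Rightarrow> (stk, seen, ans)
   | y # rest \<Rightarrow> (if y \<in> S then nbs n y @ rest else rest, insert y seen, ans @ [y \<in> S]))"

definition run :: "nat \<Rightarrow> bool list set \<Rightarrow> bool list \<Rightarrow> nat \<Rightarrow> st" where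
 "run n S v j = (step n S ^^ j) (nbs n v, {v}, [])"

abbreviation cT :: "bool list \<Rightarrow> nat" where "cT a \<equiv> length (filter (\<lambda>b. b) a)"

lemma run_0: "run n S v 0 = (nbs n v, {v}, [])" by (simp add: run_def)
lemma run_Suc: "run n S v (Suc j) = step n S (run n S v j)" by (simp add: run_def)

lemma length_nbs[simp]: "length (nbs n x) = n" by (simp add: nbs_def)

lemma nbs_cube: "x \<in> cube n \<Longrightarrow> set (nbs n x) \<subseteq> cube n"
  by (auto simp: nbs_def flip_def cube_def)

lemma adj_nbs:
  assumes "cube_adj n x y" shows "y \<in> set (nbs n x)"
proof -
  from assms have x: "length x = n" and y: "length y = n" and c: "card {i. i < n \<and> x ! i \<noteq> y ! i} = 1"
    by (auto simp: cube_adj_def cube_def)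
  from c obtain i where i: "{i. i < n \<and> x ! i \<noteq> y ! i} = {i}" by (auto simp: card_Suc_eq)
  hence "i < n" "x!i \<noteq> y!i" by auto
  have "y = flip x i"
    unfolding flip_def
  proof (rule nth_equalityI)
    show "length y = length (x[i := \<not> x ! i])" using x y by simp
    fix j assume "j < length y"
    thus "y ! j = x[i := \<not> x ! i] ! j"
      using i x y \<open>x!i \<noteq> y!i\<close> by (cases "j = i") auto
  qed
  thus ?thesis using \<open>i < n\<close> by (auto simp: nbs_def)
qed

lemma step_cases:
  obtains (stop) "dropWhile (\<lambda>y. y \<in> seen) stk = []" "step n S (stk, seen, ans) = (stk, seen, ans)"
  | (go) y rest where "dropWhile (\<lambda>y. y \<in> seen) stk = y # rest" "y \<notin> seen"
      "stk = takeWhile (\<lambda>y. y \<in> seen) stk @ y # rest"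
      "step n S (stk, seen, ans) = (if y \<in> S then nbs n y @ rest else rest, insert y seen, ans @ [y \<in> S])"
proof (cases "dropWhile (\<lambda>y. y \<in> seen) stk")
  case Nil
  have "step n S (stk, seen, ans) = (stk, seen, ans)" unfolding step_def by (simp only: prod.case Nil list.case)
  thus ?thesis using stop Nil by blast
next
  case (Cons y rest)
  have "y \<notin> seen" using Cons by (metis dropWhile_eq_Cons_conv)
  moreover have "stk = takeWhile (\<lambda>y. y \<in> seen) stk @ y # rest"
    using Cons by (metis takeWhile_dropWhile_id)
  ultimately show ?thesis using go Cons by (simp add: step_def)
qed

definition inv :: "nat \<Rightarrow> bool list set \<Rightarrow> bool list \<Rightarrow> st \<Rightarrow> bool" where
 "inv n S v st \<longleftrightarrow> (case st of (stk, seen, ans) \<Rightarrow>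
    set stk \<subseteq> cube n \<and> seen \<subseteq> cube n \<and> v \<in> seen \<and> finite seen \<and> card seen = length ans + 1
  \<and> (v \<in> S \<longrightarrow> card (seen \<inter> S) = cT ans + 1)
  \<and> (\<forall>z\<in>seen \<inter> S. set (nbs n z) \<subseteq> seen \<union> set stk)
  \<and> length stk + length ans \<le> n * (cT ans + 1))"

lemma inv_init: "v \<in> cube n \<Longrightarrow> inv n S v (nbs n v, {v}, [])"
  by (auto simp: inv_def nbs_cube)

lemma inv_step:
  assumes "inv n S v (stk, seen, ans)" shows "inv n S v (step n S (stk, seen, ans))"
proof (cases rule: step_cases[where stk=stk and seen=seen and n=n and S=S and ans=ans])
  case stop thus ?thesis using assms by simp
next
  case (go y rest)
  have I: "set stk \<subseteq> cube n" "seen \<subseteq> cube n" "v \<in> seen" "finite seen" "card seen = length ans + 1"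
    "v \<in> S \<longrightarrow> card (seen \<inter> S) = cT ans + 1"
    "\<forall>z\<in>seen \<inter> S. set (nbs n z) \<subseteq> seen \<union> set stk"
    "length stk + length ans \<le> n * (cT ans + 1)"
    using assms by (auto simp: inv_def)
  have stk_eq: "set stk = set (takeWhile (\<lambda>y. y \<in> seen) stk) \<union> insert y (set rest)"
    using go(3) by (metis set_append list.set(2))
  have yc: "y \<in> cube n" using stk_eq I(1) by auto
  have tw: "set (takeWhile (\<lambda>y. y \<in> seen) stk) \<subseteq> seen" by (auto dest: set_takeWhileD)
  have rs: "set rest \<subseteq> set stk" using stk_eq by auto
  have lenstk: "length stk \<ge> length rest + 1" using go(3) by (metis le_add2 length_Cons length_append Suc_eq_plus1)
  show ?thesis
  proof (cases "y \<in> S")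
    case True
    have "insert y seen \<inter> S = insert y (seen \<inter> S)" using True by auto
    moreover have "y \<notin> seen \<inter> S" using go by auto
    ultimately have c: "card (insert y seen \<inter> S) = card (seen \<inter> S) + 1" using I(4) by simp
    have cl: "\<forall>z\<in>insert y seen \<inter> S. set (nbs n z) \<subseteq> insert y seen \<union> set (nbs n y @ rest)"
    proof
      fix z assume z: "z \<in> insert y seen \<inter> S"
      show "set (nbs n z) \<subseteq> insert y seen \<union> set (nbs n y @ rest)"
      proof (cases "z = y")
        case True thus ?thesis by auto
      next
        case False
        hence "z \<in> seen \<inter> S" using z by auto
        hence "set (nbs n z) \<subseteq> seen \<union> set stk" using I(7) by auto
        moreover have "set stk \<subseteq> seen \<union> {y} \<union> set rest" using tw stk_eq by auto
        ultimately show ?thesis by auto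
      qed
    qed
    show ?thesis using go(4) True I c cl yc lenstk rs nbs_cube[OF yc] go(2) go(3)
      by (auto simp: inv_def card_insert_if algebra_simps)
  next
    case False
    have c: "insert y seen \<inter> S = seen \<inter> S" using False by auto
    have cl: "\<forall>z\<in>insert y seen \<inter> S. set (nbs n z) \<subseteq> insert y seen \<union> set rest"
    proof
      fix z assume z: "z \<in> insert y seen \<inter> S"
      hence "z \<in> seen \<inter> S" using False by auto
      hence "set (nbs n z) \<subseteq> seen \<union> set stk" using I(7) by auto
      moreover have "set stk \<subseteq> seen \<union> {y} \<union> set rest" using tw stk_eq by auto
      ultimately show "set (nbs n z) \<subseteq> insert y seen \<union> set rest" by auto
    qed
    show ?thesis using go(4) False I c cl yc lenstk rs go(2)
      by (auto simp: inv_def card_insert_if algebra_simps)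
  qed
qed

lemma inv_run: "v \<in> cube n \<Longrightarrow> inv n S v (run n S v j)"
proof (induction j)
  case 0 thus ?case by (simp add: run_0 inv_init)
next
  case (Suc j)
  thus ?case by (simp add: run_Suc) (metis inv_step prod.collapse)
qed

definition stopped :: "st \<Rightarrow> bool" where
  "stopped st \<longleftrightarrow> dropWhile (\<lambda>y. y \<in> fst (snd st)) (fst st) = []"
definition qry :: "st \<Rightarrow> bool list" where
  "qry st = hd (dropWhile (\<lambda>y. y \<in> fst (snd st)) (fst st))"

lemma step_stopped: "stopped st \<Longrightarrow> step n S st = st"
proof -
  obtain stk seen ans where st: "st = (stk, seen, ans)" by (cases st)
  assume "stopped st"
  hence "dropWhile (\<lambda>y. y \<in> seen) stk = []" by (simp add: st stopped_def del: dropWhile_eq_Nil_conv)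
  thus ?thesis unfolding st step_def by (simp only: prod.case list.case)
qed

lemma step_go:
  assumes "\<not> stopped st"
  shows "step n S st = (if qry st \<in> S then nbs n (qry st) @ tl (dropWhile (\<lambda>y. y \<in> fst (snd st)) (fst st))
                        else tl (dropWhile (\<lambda>y. y \<in> fst (snd st)) (fst st)),
            insert (qry st) (fst (snd st)), snd (snd st) @ [qry st \<in> S])"
    "qry st \<notin> fst (snd st)"
proof -
  obtain stk seen ans where st: "st = (stk, seen, ans)" by (cases st)
  then obtain y rest where dw: "dropWhile (\<lambda>y. y \<in> seen) stk = y # rest"
    using assms by (cases "dropWhile (\<lambda>y. y \<in> seen) stk") (auto simp: stopped_def)
  show "step n S st = (if qry st \<in> S then nbs n (qry st) @ tl (dropWhile (\<lambda>y. y \<in> fst (snd st)) (fst st))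
                        else tl (dropWhile (\<lambda>y. y \<in> fst (snd st)) (fst st)),
            insert (qry st) (fst (snd st)), snd (snd st) @ [qry st \<in> S])"
    using dw by (simp add: st step_def qry_def)
  show "qry st \<notin> fst (snd st)" using dw by (simp add: st qry_def) (metis dropWhile_eq_Cons_conv)
qed

lemma ans_step: "snd (snd (step n S st)) = (if stopped st then snd (snd st) else snd (snd st) @ [qry st \<in> S])"
  using step_go(1)[where st=st and n=n and S=S] step_stopped[where st=st and n=n and S=S] by auto

lemma len_ans_le: "length (snd (snd (run n S v j))) \<le> j"
  by (induction j) (auto simp: run_0 run_Suc ans_step)

lemma canon: "\<exists>i\<le>j. run n S v j = run n S v i \<and> length (snd (snd (run n S v i))) = i"
proof (induction j)
  case 0 thus ?case by (auto simp: run_0)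
next
  case (Suc j)
  then obtain i where i: "i \<le> j" "run n S v j = run n S v i" "length (snd (snd (run n S v i))) = i" by blast
  show ?case
  proof (cases "stopped (run n S v j)")
    case True
    have "run n S v (Suc j) = run n S v j" unfolding run_Suc using True by (rule step_stopped)
    hence "run n S v (Suc j) = run n S v i" using i(2) by simp
    thus ?thesis using i by (intro exI[of _ i]) auto
  next
    case False
    have "run n S v (Suc j) = run n S v (Suc i)" unfolding run_Suc i(2) ..
    moreover have "length (snd (snd (run n S v (Suc i)))) = Suc i" unfolding run_Suc ans_step
      using i(2,3) False by simp
    ultimately show ?thesis using i by (intro exI[of _ "Suc i"]) auto
  qed
qed

lemma prefix:
  assumes "length (snd (snd (run n S v j))) = j" "i \<le> j"
  shows "snd (snd (run n S v i)) = take i (snd (snd (run n S v j)))"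
  using assms
proof (induction j arbitrary: i)
  case 0 thus ?case by simp
next
  case (Suc j)
  have ns: "\<not> stopped (run n S v j)"
  proof
    assume "stopped (run n S v j)"
    hence "run n S v (Suc j) = run n S v j" unfolding run_Suc by (rule step_stopped)
    thus False using Suc.prems(1) len_ans_le[of n S v j] by simp
  qed
  hence e: "snd (snd (run n S v (Suc j))) = snd (snd (run n S v j)) @ [qry (run n S v j) \<in> S]"
    unfolding run_Suc ans_step by simp
  hence lj: "length (snd (snd (run n S v j))) = j" using Suc.prems(1) by simp
  show ?case
  proof (cases "i = Suc j")
    case True thus ?thesis using Suc.prems(1) by simp
  next
    case False
    hence "i \<le> j" using Suc.prems(2) by simp
    hence "snd (snd (run n S v i)) = take i (snd (snd (run n S v j)))" by (rule Suc.IH[OF lj])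
    thus ?thesis using e lj \<open>i \<le> j\<close> by simp
  qed
qed

lemma prefix_len:
  assumes "length (snd (snd (run n S v j))) = j" "i \<le> j"
  shows "length (snd (snd (run n S v i))) = i"
  using prefix[OF assms] assms by simp

lemma notstopped:
  assumes "length (snd (snd (run n S v j))) = j" "i < j"
  shows "\<not> stopped (run n S v i)"
proof
  assume "stopped (run n S v i)"
  hence "run n S v (Suc i) = run n S v i" unfolding run_Suc by (rule step_stopped)
  moreover have "length (snd (snd (run n S v (Suc i)))) = Suc i" using prefix_len[OF assms(1)] assms(2) by simp
  ultimately show False using len_ans_le[of n S v i] by simp
qed

lemma det:
  assumes "length (snd (snd (run n S v j))) = j" "snd (snd (run n S' v j)) = snd (snd (run n S v j))"
  shows "run n S' v j = run n S v j"
  using assms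
proof (induction j)
  case 0 thus ?case by (simp add: run_0)
next
  case (Suc j)
  have l1: "length (snd (snd (run n S v j))) = j" using prefix_len[OF Suc.prems(1)] by simp
  have l2: "length (snd (snd (run n S' v (Suc j)))) = Suc j" using Suc.prems by simp
  have "snd (snd (run n S' v j)) = snd (snd (run n S v j))"
    using prefix[OF Suc.prems(1), of j] prefix[OF l2, of j] Suc.prems(2) by simp
  hence eq: "run n S' v j = run n S v j" using Suc.IH l1 by simp
  have ns: "\<not> stopped (run n S v j)" using notstopped[OF Suc.prems(1)] by simp
  have "(qry (run n S v j) \<in> S') = (qry (run n S v j) \<in> S)"
    using Suc.prems(2) ns eq unfolding run_Suc ans_step by simp
  thus ?case using eq ns unfolding run_Suc by (simp add: step_go(1))
qed

lemma ans_nth: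
  assumes "length (snd (snd (run n S v j))) = j" "i < j"
  shows "snd (snd (run n S v j)) ! i = (qry (run n S v i) \<in> S)"
proof -
  have "snd (snd (run n S v (Suc i))) = take (Suc i) (snd (snd (run n S v j)))"
    using prefix[OF assms(1), of "Suc i"] assms by simp
  moreover have "snd (snd (run n S v (Suc i))) = snd (snd (run n S v i)) @ [qry (run n S v i) \<in> S]"
    using notstopped[OF assms] unfolding run_Suc ans_step by simp
  moreover have "length (snd (snd (run n S v i))) = i" using prefix_len[OF assms(1), of i] assms by simp
  ultimately have "take (Suc i) (snd (snd (run n S v j))) ! i = (qry (run n S v i) \<in> S)"
    by (metis nth_append_length)
  thus ?thesis by simp
qed

lemma seen_mono: "i \<le> j \<Longrightarrow> fst (snd (run n S v i)) \<subseteq> fst (snd (run n S v j))"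
proof (induction j)
  case 0 thus ?case by simp
next
  case (Suc j)
  have sj: "fst (snd (run n S v j)) \<subseteq> fst (snd (run n S v (Suc j)))"
    using step_go(1)[where st="run n S v j" and n=n and S=S] step_stopped[where st="run n S v j" and n=n and S=S]
    unfolding run_Suc by (cases "stopped (run n S v j)") auto
  show ?case
  proof (cases "i = Suc j")
    case True thus ?thesis by simp
  next
    case False
    hence "i \<le> j" using Suc.prems by simp
    hence "fst (snd (run n S v i)) \<subseteq> fst (snd (run n S v j))" by (rule Suc.IH)
    thus ?thesis using \<open>fst (snd (run n S v j)) \<subseteq> fst (snd (run n S v (Suc j)))\<close> by blast
  qed
qed

lemma qry_props:
  assumes "v \<in> cube n" "length (snd (snd (run n S v j))) = j" "i < j"
  shows "qry (run n S v i) \<in> cube n" "qry (run n S v i) \<notin> fst (snd (run n S v i))"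
    "qry (run n S v i) \<in> fst (snd (run n S v (Suc i)))"
proof -
  have ns: "\<not> stopped (run n S v i)" using notstopped[OF assms(2,3)] .
  obtain stk seen ans where st: "run n S v i = (stk, seen, ans)" by (cases "run n S v i")
  have "set stk \<subseteq> cube n" using inv_run[OF assms(1), of S i] st by (simp add: inv_def)
  moreover have "qry (run n S v i) \<in> set stk"
  proof -
    have "dropWhile (\<lambda>y. y \<in> seen) stk \<noteq> []" using ns st by (simp add: stopped_def del: dropWhile_eq_Nil_conv)
    hence "hd (dropWhile (\<lambda>y. y \<in> seen) stk) \<in> set (dropWhile (\<lambda>y. y \<in> seen) stk)" by (rule hd_in_set)
    hence "hd (dropWhile (\<lambda>y. y \<in> seen) stk) \<in> set stk" by (rule set_dropWhileD)
    thus ?thesis by (simp add: qry_def st)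
  qed
  ultimately show "qry (run n S v i) \<in> cube n" using st by auto
  show "qry (run n S v i) \<notin> fst (snd (run n S v i))" using step_go(2)[OF ns] .
  show "qry (run n S v i) \<in> fst (snd (run n S v (Suc i)))" unfolding run_Suc step_go(1)[OF ns, where n=n and S=S] by simp
qed

lemma cube_eq: "cube n = {xs. set xs \<subseteq> UNIV \<and> length xs = n}" by (simp add: cube_def)
lemma finite_cube: "finite (cube n)" unfolding cube_eq by (rule finite_lists_length_eq) simp
lemma card_cube: "card (cube n) = 2 ^ n" unfolding cube_eq by (subst card_lists_length_eq) simp_all

lemma terminates:
  assumes "v \<in> cube n" shows "\<exists>j. stopped (run n S v j)"
proof (rule ccontr)
  assume "\<not> (\<exists>j. stopped (run n S v j))"
  hence ns: "\<And>j. \<not> stopped (run n S v j)" by blast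
  have len: "length (snd (snd (run n S v j))) = j" for j
    by (induction j) (simp_all add: run_0 run_Suc ans_step ns)
  define j where "j = card (cube n)"
  obtain stk seen ans where st: "run n S v j = (stk, seen, ans)" by (cases "run n S v j")
  have "card seen = length ans + 1" "seen \<subseteq> cube n" using inv_run[OF assms, of S j] st by (auto simp: inv_def)
  moreover have "length ans = j" using len[of j] st by simp
  ultimately have "j + 1 \<le> card (cube n)" using card_mono[OF finite_cube] by metis
  thus False by (simp add: j_def)
qed

lemma comp_sub:
  assumes "v \<in> cube n" "v \<in> S" "stopped (run n S v j)"
  shows "component n S v \<subseteq> fst (snd (run n S v j)) \<inter> S"
proof -
  obtain stk seen ans where st: "run n S v j = (stk, seen, ans)" by (cases "run n S v j")
  have I: "v \<in> seen" "\<forall>z\<in>seen \<inter> S. set (nbs n z) \<subseteq> seen \<union> set stk"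
    using inv_run[OF assms(1), of S j] st by (auto simp: inv_def)
  have sk: "set stk \<subseteq> seen" using assms(3) st by (auto simp: stopped_def)
  have "y \<in> seen \<inter> S" if "(induced_adj n S)\<^sup>*\<^sup>* v y" for y
    using that
  proof (induction rule: rtranclp_induct)
    case base thus ?case using I(1) assms(2) by simp
  next
    case (step x y)
    hence "y \<in> S" "cube_adj n x y" by (auto simp: induced_adj_def)
    hence "y \<in> set (nbs n x)" using adj_nbs by blast
    thus ?case using step.IH I(2) sk \<open>y \<in> S\<close> by blast
  qed
  thus ?thesis using st by (auto simp: component_def)
qed

lemma ivt: "m \<le> cT A \<Longrightarrow> \<exists>k\<le>length A. cT (take k A) = m"
proof (induction A arbitrary: m)
  case Nil thus ?case by simp
next
  case (Cons x xs)
  show ?case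
  proof (cases m)
    case 0 thus ?thesis by (intro exI[of _ 0]) simp
  next
    case (Suc m')
    show ?thesis
    proof (cases x)
      case True
      hence "m' \<le> cT xs" using Cons.prems Suc by simp
      then obtain k where "k \<le> length xs" "cT (take k xs) = m'" using Cons.IH by blast
      thus ?thesis using True Suc by (intro exI[of _ "Suc k"]) simp
    next
      case False
      hence "m \<le> cT xs" using Cons.prems by simp
      then obtain k where "k \<le> length xs" "cT (take k xs) = m" using Cons.IH by blast
      thus ?thesis using False by (intro exI[of _ "Suc k"]) simp
    qed
  qed
qed

lemma reach:
  assumes "v \<in> cube n" "v \<in> S" "m + 1 \<le> card (component n S v)"
  shows "\<exists>a. length a \<le> n * (m + 1) \<and> cT a = m \<and> snd (snd (run n S v (length a))) = a"
proof -
  obtain j where sj: "stopped (run n S v j)" using terminates[OF assms(1)] by blast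
  obtain i where i: "run n S v j = run n S v i" "length (snd (snd (run n S v i))) = i"
    using canon by blast
  obtain stk seen A where st: "run n S v i = (stk, seen, A)" by (cases "run n S v i")
  have I: "finite seen" "card (seen \<inter> S) = cT A + 1"
    using inv_run[OF assms(1), of S i] st assms(2) by (auto simp: inv_def)
  have "component n S v \<subseteq> seen \<inter> S" using comp_sub[OF assms(1,2), of i] sj i st by simp
  hence "card (component n S v) \<le> cT A + 1" using I card_mono[of "seen \<inter> S"] by auto
  hence "m \<le> cT A" using assms(3) by simp
  then obtain k where k: "k \<le> length A" "cT (take k A) = m" using ivt by blast
  have lA: "length A = i" using i(2) st by simp
  have ak: "snd (snd (run n S v k)) = take k A" using prefix[OF i(2), of k] k(1) lA st by simp
  have lk: "length (take k A) = k" using k(1) by simp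
  obtain stk' seen' A' where st': "run n S v k = (stk', seen', A')" by (cases "run n S v k")
  have "length stk' + length A' \<le> n * (cT A' + 1)" using inv_run[OF assms(1), of S k] st' by (simp add: inv_def)
  hence "length (take k A) \<le> n * (m + 1)" using ak st' k(2) by simp
  thus ?thesis using ak lk k(2) by (intro exI[of _ "take k A"]) simp
qed

definition wt :: "real \<Rightarrow> real \<Rightarrow> bool \<Rightarrow> real" where
  "wt a b x = (if x then a else b)"

lemma prod_list_nth: "prod_list (map f a) = (\<Prod>i<length a. f (a ! i))"
proof (induction a)
  case Nil thus ?case by simp
next
  case (Cons x xs)
  thus ?case by (simp add: prod.lessThan_Suc_shift del: prod.lessThan_Suc)
qed

lemma prob_agree:
  assumes "Q \<subseteq> cube n" "0 \<le> p" "p \<le> 1"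
  shows "measure_pmf.prob (random_vertex_set n p) {S. \<forall>x\<in>Q. (x \<in> S) = g x}
         = (\<Prod>x\<in>Q. wt p (1 - p) (g x))"
proof -
  define B where "B x = (if x \<in> Q then {g x} else UNIV)" for x
  have eq: "(\<lambda>f. {x \<in> cube n. f x}) -` {S. \<forall>x\<in>Q. (x \<in> S) = g x} = Pi (cube n) B"
    using assms(1) by (auto simp: B_def Pi_def)
  have "measure_pmf.prob (random_vertex_set n p) {S. \<forall>x\<in>Q. (x \<in> S) = g x}
      = measure_pmf.prob (Pi_pmf (cube n) False (\<lambda>_. bernoulli_pmf p)) (Pi (cube n) B)"
    unfolding random_vertex_set_def measure_map_pmf eq ..
  also have "\<dots> = (\<Prod>x\<in>cube n. measure_pmf.prob (bernoulli_pmf p) (B x))"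
    by (rule measure_Pi_pmf_Pi[OF finite_cube])
  also have "\<dots> = (\<Prod>x\<in>cube n. if x \<in> Q then wt p (1 - p) (g x) else 1)"
  proof (rule prod.cong[OF refl])
    fix x
    have "measure_pmf.prob (bernoulli_pmf p) {b} = wt p (1 - p) b" for b
      using assms(2,3) by (cases b) (simp_all add: measure_pmf_single wt_def)
    thus "measure_pmf.prob (bernoulli_pmf p) (B x) = (if x \<in> Q then wt p (1 - p) (g x) else 1)"
      by (simp add: B_def)
  qed
  also have "\<dots> = (\<Prod>x\<in>cube n \<inter> Q. wt p (1 - p) (g x))"
    by (rule prod.inter_restrict[OF finite_cube, symmetric])
  also have "cube n \<inter> Q = Q" using assms(1) by blast
  finally show ?thesis .
qed

lemma prob_ans:
  assumes "v \<in> cube n" "0 \<le> p" "p \<le> 1"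
  shows "measure_pmf.prob (random_vertex_set n p) {S. snd (snd (run n S v (length a))) = a}
         \<le> prod_list (map (wt p (1 - p)) a)"
proof (cases "{S. snd (snd (run n S v (length a))) = a} = {}")
  case True
  have "prod_list (map (wt p (1 - p)) a) \<ge> 0"
    by (rule prod_list_nonneg) (use assms in \<open>auto simp: wt_def\<close>)
  thus ?thesis using True by simp
next
  case False
  define L where "L = length a"
  then obtain S0 where S0: "snd (snd (run n S0 v L)) = a" using False by auto
  have l0: "length (snd (snd (run n S0 v L))) = L" using S0 L_def by simp
  define q where "q i = qry (run n S0 v i)" for i
  have sub: "{S. snd (snd (run n S v L)) = a} \<subseteq> {S. \<forall>i<L. (q i \<in> S) = a ! i}"
  proof (intro subsetI CollectI allI impI)
    fix S i assume "S \<in> {S. snd (snd (run n S v L)) = a}" and i: "i < L"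
    hence S: "snd (snd (run n S v L)) = a" by simp
    have lS: "length (snd (snd (run n S v L))) = L" using S L_def by simp
    have e1: "snd (snd (run n S v i)) = snd (snd (run n S0 v i))"
      using prefix[OF lS, of i] prefix[OF l0, of i] S S0 i by simp
    have e2: "length (snd (snd (run n S0 v i))) = i" using prefix_len[OF l0, of i] i by simp
    have "run n S v i = run n S0 v i" by (rule det[OF e2 e1])
    hence "a ! i = (q i \<in> S)" using ans_nth[OF lS i] S by (simp add: q_def)
    thus "(q i \<in> S) = a ! i" by simp
  qed
  have inj: "inj_on q {..<L}"
  proof (rule inj_onI)
    have *: "q i \<noteq> q i'" if "i < i'" "i' < L" for i i'
    proof -
      have "q i \<in> fst (snd (run n S0 v (Suc i)))" using qry_props(3)[OF assms(1) l0, of i] that by (simp add: q_def)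
      also have "\<dots> \<subseteq> fst (snd (run n S0 v i'))" using seen_mono that by simp
      finally show ?thesis using qry_props(2)[OF assms(1) l0, of i'] that by (auto simp: q_def)
    qed
    fix i i' assume "i \<in> {..<L}" "i' \<in> {..<L}" "q i = q i'"
    thus "i = i'" using *[of i i'] *[of i' i] by (cases i i' rule: linorder_cases) auto
  qed
  define g where "g x = a ! the_inv_into {..<L} q x" for x
  have gq: "g (q i) = a ! i" if "i < L" for i
    using the_inv_into_f_f[OF inj] that by (simp add: g_def)
  have Qc: "q ` {..<L} \<subseteq> cube n" using qry_props(1)[OF assms(1) l0] by (auto simp: q_def)
  have "{S. \<forall>i<L. (q i \<in> S) = a ! i} = {S. \<forall>x\<in>q ` {..<L}. (x \<in> S) = g x}"
  proof (rule Collect_cong)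
    fix S
    show "(\<forall>i<L. (q i \<in> S) = a ! i) = (\<forall>x\<in>q ` {..<L}. (x \<in> S) = g x)"
    proof
      assume H: "\<forall>i<L. (q i \<in> S) = a ! i"
      show "\<forall>x\<in>q ` {..<L}. (x \<in> S) = g x"
      proof
        fix x assume "x \<in> q ` {..<L}"
        then obtain i where i: "i < L" "x = q i" by auto
        thus "(x \<in> S) = g x" using H gq[OF i(1)] by simp
      qed
    next
      assume H: "\<forall>x\<in>q ` {..<L}. (x \<in> S) = g x"
      show "\<forall>i<L. (q i \<in> S) = a ! i"
      proof (intro allI impI)
        fix i assume i: "i < L"
        hence "q i \<in> q ` {..<L}" by simp
        hence "(q i \<in> S) = g (q i)" using H by blast
        thus "(q i \<in> S) = a ! i" using gq[OF i] by simp
      qed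
    qed
  qed
  hence sub2: "{S. snd (snd (run n S v L)) = a} \<subseteq> {S. \<forall>x\<in>q ` {..<L}. (x \<in> S) = g x}"
    using sub by simp
  have "measure_pmf.prob (random_vertex_set n p) {S. snd (snd (run n S v L)) = a}
      \<le> measure_pmf.prob (random_vertex_set n p) {S. \<forall>x\<in>q ` {..<L}. (x \<in> S) = g x}"
    by (rule measure_pmf.finite_measure_mono[OF sub2]) simp
  also have "\<dots> = (\<Prod>x\<in>q ` {..<L}. wt p (1 - p) (g x))" by (rule prob_agree[OF Qc assms(2,3)])
  also have "\<dots> = (\<Prod>i<L. wt p (1 - p) (g (q i)))" by (subst prod.reindex[OF inj]) simp
  also have "\<dots> = (\<Prod>i<L. wt p (1 - p) (a ! i))" using gq by simp
  also have "\<dots> = prod_list (map (wt p (1 - p)) a)" by (simp add: prod_list_nth L_def)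
  finally show ?thesis by (simp add: L_def)
qed

lemma len_eq_set: "{a::bool list. length a = L} = {xs. set xs \<subseteq> UNIV \<and> length xs = L}" by simp

lemma finite_len: "finite {a::bool list. length a = L}"
  unfolding len_eq_set by (rule finite_lists_length_eq) simp

lemma sum_len: "(\<Sum>a\<in>{a::bool list. length a = L}. prod_list (map (wt x y) a)) = (x + y) ^ L"
proof (induction L)
  case 0
  have "{a::bool list. length a = 0} = {[]}" by auto
  thus ?case by simp
next
  case (Suc L)
  have e: "{a::bool list. length a = Suc L} = (\<lambda>(xs, b). b # xs) ` ({a. length a = L} \<times> UNIV)"
    using lists_length_Suc_eq[of "UNIV::bool set" L] by simp
  have inj: "inj_on (\<lambda>(xs, b). b # xs) ({a::bool list. length a = L} \<times> UNIV)"
    by (auto simp: inj_on_def)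
  have "(\<Sum>a\<in>{a::bool list. length a = Suc L}. prod_list (map (wt x y) a))
      = (\<Sum>(xs, b)\<in>{a::bool list. length a = L} \<times> UNIV. wt x y b * prod_list (map (wt x y) xs))"
    unfolding e by (subst sum.reindex[OF inj]) (simp add: case_prod_beta)
  also have "\<dots> = (\<Sum>xs\<in>{a::bool list. length a = L}. \<Sum>b\<in>UNIV. wt x y b * prod_list (map (wt x y) xs))"
    by (rule sum.cartesian_product[symmetric])
  also have "\<dots> = (\<Sum>xs\<in>{a::bool list. length a = L}. (x + y) * prod_list (map (wt x y) xs))"
    by (simp add: UNIV_bool wt_def algebra_simps)
  also have "\<dots> = (x + y) ^ Suc L" using Suc by (simp add: sum_distrib_left[symmetric])
  finally show ?case .
qed

lemma wt_scale: "prod_list (map (wt (p * t) y) a) = t ^ cT a * prod_list (map (wt p y) a)"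
  by (induction a) (auto simp: wt_def algebra_simps)

lemma sum_m:
  assumes "0 \<le> p" "p \<le> 1" "1 \<le> t"
  shows "(\<Sum>a\<in>{a::bool list. length a = L \<and> cT a = m}. prod_list (map (wt p (1 - p)) a))
         \<le> (1 / t) ^ m * (1 - p + p * t) ^ L"
proof -
  have nn: "0 \<le> prod_list (map (wt (p * t) (1 - p)) a)" for a
    by (rule prod_list_nonneg) (use assms in \<open>auto simp: wt_def\<close>)
  have "(\<Sum>a\<in>{a::bool list. length a = L \<and> cT a = m}. prod_list (map (wt p (1 - p)) a))
      = (\<Sum>a\<in>{a::bool list. length a = L \<and> cT a = m}. (1 / t) ^ m * prod_list (map (wt (p * t) (1 - p)) a))"
  proof (rule sum.cong[OF refl])
    fix a assume "a \<in> {a::bool list. length a = L \<and> cT a = m}"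
    hence "cT a = m" by simp
    thus "prod_list (map (wt p (1 - p)) a) = (1 / t) ^ m * prod_list (map (wt (p * t) (1 - p)) a)"
      using assms(3) by (simp add: wt_scale power_one_over field_simps)
  qed
  also have "\<dots> = (1 / t) ^ m * (\<Sum>a\<in>{a::bool list. length a = L \<and> cT a = m}. prod_list (map (wt (p * t) (1 - p)) a))"
    by (simp add: sum_distrib_left)
  also have "\<dots> \<le> (1 / t) ^ m * (\<Sum>a\<in>{a::bool list. length a = L}. prod_list (map (wt (p * t) (1 - p)) a))"
    using assms(3) by (intro mult_left_mono sum_mono2[OF finite_len] nn) auto
  also have "\<dots> = (1 / t) ^ m * (1 - p + p * t) ^ L" by (simp add: sum_len algebra_simps)
  finally show ?thesis .
qed

lemma support_cube: "S \<in> set_pmf (random_vertex_set n p) \<Longrightarrow> S \<subseteq> cube n"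
  by (auto simp: random_vertex_set_def)

lemma main_bound:
  assumes p: "0 \<le> p" "p \<le> 1" and t: "1 \<le> t" and mb: "\<And>c::nat. real c > b \<Longrightarrow> m + 1 \<le> c"
  shows "measure_pmf.prob (random_vertex_set n p) {S. \<not> components_bounded n S b}
     \<le> 2 ^ n * (real (n * (m + 1)) + 1) * ((1 / t) ^ m * (1 - p + p * t) ^ (n * (m + 1)))"
proof -
  define M where "M = random_vertex_set n p"
  define N where "N = n * (m + 1)"
  define I where "I = Sigma {..N} (\<lambda>L. {a::bool list. length a = L \<and> cT a = m})"
  define E where "E v = (\<Union>(L, a)\<in>I. {S. snd (snd (run n S v L)) = a})" for v
  have finI: "finite I" unfolding I_def
    by (rule finite_SigmaI) (auto intro: finite_subset[OF _ finite_len])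
  have sub: "{S. \<not> components_bounded n S b} \<subseteq> (\<Union>v\<in>cube n. E v) \<union> {S. \<not> S \<subseteq> cube n}"
  proof
    fix S assume "S \<in> {S. \<not> components_bounded n S b}"
    then obtain x where x: "x \<in> S" "real (card (component n S x)) > b"
      by (auto simp: components_bounded_def not_le)
    show "S \<in> (\<Union>v\<in>cube n. E v) \<union> {S. \<not> S \<subseteq> cube n}"
    proof (cases "S \<subseteq> cube n")
      case True
      hence xc: "x \<in> cube n" using x by auto
      have "m + 1 \<le> card (component n S x)" using mb x(2) by blast
      then obtain a where a: "length a \<le> N" "cT a = m" "snd (snd (run n S x (length a))) = a"
        using reach[OF xc x(1)] N_def by blast
      have "(length a, a) \<in> I" using a by (simp add: I_def)
      hence "S \<in> E x" using a(3) unfolding E_def by blast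
      thus ?thesis using xc by blast
    qed simp
  qed
  have "measure_pmf.prob M {S. \<not> components_bounded n S b}
      \<le> measure_pmf.prob M ((\<Union>v\<in>cube n. E v) \<union> {S. \<not> S \<subseteq> cube n})"
    by (rule measure_pmf.finite_measure_mono[OF sub]) simp
  also have "\<dots> \<le> measure_pmf.prob M (\<Union>v\<in>cube n. E v) + measure_pmf.prob M {S. \<not> S \<subseteq> cube n}"
    by (rule measure_Un_le) simp_all
  also have "measure_pmf.prob M {S. \<not> S \<subseteq> cube n} = 0"
    unfolding measure_pmf_zero_iff M_def using support_cube by blast
  also have "measure_pmf.prob M (\<Union>v\<in>cube n. E v) \<le> (\<Sum>v\<in>cube n. measure_pmf.prob M (E v))"
    by (rule measure_pmf.finite_measure_subadditive_finite[OF finite_cube]) simp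
  also have "\<dots> \<le> (\<Sum>v\<in>cube n. real (N + 1) * ((1 / t) ^ m * (1 - p + p * t) ^ N))"
  proof (rule sum_mono)
    fix v assume v: "v \<in> cube n"
    have "measure_pmf.prob M (E v) \<le> (\<Sum>(L, a)\<in>I. measure_pmf.prob M {S. snd (snd (run n S v L)) = a})"
      unfolding E_def using measure_pmf.finite_measure_subadditive_finite[OF finI, of "\<lambda>(L, a). {S. snd (snd (run n S v L)) = a}" M]
      by (simp add: case_prod_beta)
    also have "\<dots> \<le> (\<Sum>(L, a)\<in>I. prod_list (map (wt p (1 - p)) a))"
    proof (rule sum_mono)
      fix i assume "i \<in> I"
      then obtain L a where i: "i = (L, a)" "length a = L" by (auto simp: I_def)
      show "(case i of (L, a) \<Rightarrow> measure_pmf.prob M {S. snd (snd (run n S v L)) = a})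
            \<le> (case i of (L, a) \<Rightarrow> prod_list (map (wt p (1 - p)) a))"
        using prob_ans[OF v p, of a] i by (simp add: M_def)
    qed
    also have "\<dots> = (\<Sum>L\<le>N. \<Sum>a\<in>{a::bool list. length a = L \<and> cT a = m}. prod_list (map (wt p (1 - p)) a))"
      unfolding I_def by (rule sum.Sigma[symmetric]) (auto intro: finite_subset[OF _ finite_len])
    also have "\<dots> \<le> (\<Sum>L\<le>N. (1 / t) ^ m * (1 - p + p * t) ^ N)"
    proof (rule sum_mono)
      fix L assume "L \<in> {..N}"
      hence L: "L \<le> N" by simp
      have "1 \<le> 1 - p + p * t" using p t by (simp add: mult_left_mono[of 1 t p, simplified])
      hence "(1 - p + p * t) ^ L \<le> (1 - p + p * t) ^ N" using L by (intro power_increasing)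
      hence "(1 / t) ^ m * (1 - p + p * t) ^ L \<le> (1 / t) ^ m * (1 - p + p * t) ^ N"
        using t by (intro mult_left_mono) auto
      thus "(\<Sum>a\<in>{a::bool list. length a = L \<and> cT a = m}. prod_list (map (wt p (1 - p)) a))
            \<le> (1 / t) ^ m * (1 - p + p * t) ^ N"
        using sum_m[OF p t, of L m] by linarith
    qed
    also have "\<dots> = real (N + 1) * ((1 / t) ^ m * (1 - p + p * t) ^ N)" by simp
    finally show "measure_pmf.prob M (E v) \<le> real (N + 1) * ((1 / t) ^ m * (1 - p + p * t) ^ N)" .
  qed
  also have "\<dots> = 2 ^ n * real (N + 1) * ((1 / t) ^ m * (1 - p + p * t) ^ N)"
    by (simp add: card_cube)
  finally show ?thesis by (simp add: M_def N_def add.commute)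
qed

lemma final_bound:
  fixes \<epsilon> q \<kappa> :: real and n :: nat
  assumes e: "0 < \<epsilon>" "\<epsilon> < 1" and qd: "q = (1 - \<epsilon>) * exp \<epsilon>" and q: "0 < q" "q < 1"
    and k: "0 < \<kappa>" and qk: "q powr \<kappa> = 1 / 8" and n: "1 \<le> n"
  shows "measure_pmf.prob (random_vertex_set n ((1 - \<epsilon>) / real n)) {S. \<not> components_bounded n S (\<kappa> * real n)}
     \<le> exp \<epsilon> / q * (real n * (\<kappa> * real n + 1) + 1) / 4 ^ n"
proof -
  define p where "p = (1 - \<epsilon>) / real n"
  define t where "t = 1 / (1 - \<epsilon>)"
  define m where "m = nat \<lfloor>\<kappa> * real n\<rfloor>"
  have p: "0 \<le> p" "p \<le> 1" using e n by (auto simp: p_def field_simps)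
  have t: "1 \<le> t" using e by (simp add: t_def field_simps)
  have kn: "0 \<le> \<kappa> * real n" using k by simp
  have mle: "real m \<le> \<kappa> * real n" using kn by (simp add: m_def)
  have mge: "\<kappa> * real n - 1 \<le> real m" using kn by (simp add: m_def)
  have mb: "m + 1 \<le> c" if "real c > \<kappa> * real n" for c :: nat
  proof -
    have "\<lfloor>\<kappa> * real n\<rfloor> < int c" using that by linarith
    thus ?thesis using kn by (simp add: m_def) linarith
  qed
  have MB: "measure_pmf.prob (random_vertex_set n p) {S. \<not> components_bounded n S (\<kappa> * real n)}
     \<le> 2 ^ n * (real (n * (m + 1)) + 1) * ((1 / t) ^ m * (1 - p + p * t) ^ (n * (m + 1)))"
    by (rule main_bound[OF p t mb])
  have t1: "1 / t = 1 - \<epsilon>" by (simp add: t_def)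
  have pt: "1 - p + p * t = 1 + \<epsilon> / real n" using e n by (simp add: p_def t_def field_simps)
  have pw: "(1 + \<epsilon> / real n) ^ (n * (m + 1)) \<le> exp \<epsilon> ^ m * exp \<epsilon>"
  proof -
    have "(1 + \<epsilon> / real n) ^ (n * (m + 1)) \<le> exp (\<epsilon> / real n) ^ (n * (m + 1))"
      using e by (intro power_mono) (simp_all add: exp_ge_add_one_self add.commute)
    also have "\<dots> = exp (real (n * (m + 1)) * (\<epsilon> / real n))" by (rule exp_of_nat_mult[symmetric])
    also have "real (n * (m + 1)) * (\<epsilon> / real n) = real (Suc m) * \<epsilon>" using n by (simp add: field_simps)
    also have "exp (real (Suc m) * \<epsilon>) = exp \<epsilon> ^ m * exp \<epsilon>"
      unfolding exp_of_nat_mult power_Suc by (rule mult.commute)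
    finally show ?thesis .
  qed
  have qm: "q ^ m \<le> (1 / 8) ^ n / q"
  proof -
    have "q ^ m = q powr real m" using q by (simp add: powr_realpow)
    also have "\<dots> \<le> q powr (\<kappa> * real n - 1)" using q mge by (intro powr_mono') auto
    also have "\<dots> = (q powr \<kappa>) powr real n / q" using q by (simp add: powr_diff powr_powr mult.commute)
    also have "\<dots> = (1 / 8) ^ n / q" by (simp add: qk powr_realpow)
    finally show ?thesis .
  qed
  have "2 ^ n * (real (n * (m + 1)) + 1) * ((1 / t) ^ m * (1 - p + p * t) ^ (n * (m + 1)))
      \<le> 2 ^ n * (real n * (\<kappa> * real n + 1) + 1) * ((1 - \<epsilon>) ^ m * (exp \<epsilon> ^ m * exp \<epsilon>))"
  proof (rule mult_mono)
    have "real n * (real m + 1) \<le> real n * (\<kappa> * real n + 1)" using mle by (intro mult_left_mono) auto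
    hence "real (n * (m + 1)) + 1 \<le> real n * (\<kappa> * real n + 1) + 1" by (simp add: algebra_simps)
    thus "2 ^ n * (real (n * (m + 1)) + 1) \<le> 2 ^ n * (real n * (\<kappa> * real n + 1) + 1)" by simp
    show "(1 / t) ^ m * (1 - p + p * t) ^ (n * (m + 1)) \<le> (1 - \<epsilon>) ^ m * (exp \<epsilon> ^ m * exp \<epsilon>)"
      unfolding t1 pt using e pw by (intro mult_left_mono) auto
    show "0 \<le> 2 ^ n * (real n * (\<kappa> * real n + 1) + 1)" using k by simp
    show "0 \<le> (1 / t) ^ m * (1 - p + p * t) ^ (n * (m + 1))" using e unfolding t1 pt by simp
  qed
  also have "(1 - \<epsilon>) ^ m * (exp \<epsilon> ^ m * exp \<epsilon>) = q ^ m * exp \<epsilon>" by (simp add: qd power_mult_distrib)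
  also have "2 ^ n * (real n * (\<kappa> * real n + 1) + 1) * (q ^ m * exp \<epsilon>)
      \<le> 2 ^ n * (real n * (\<kappa> * real n + 1) + 1) * ((1 / 8) ^ n / q * exp \<epsilon>)"
    using qm k by (intro mult_left_mono mult_right_mono) auto
  also have "\<dots> = exp \<epsilon> / q * (real n * (\<kappa> * real n + 1) + 1) * (2 ^ n * (1 / 8) ^ n)"
    by (simp add: field_simps)
  also have "(2::real) ^ n * (1 / 8) ^ n = 1 / 4 ^ n"
  proof -
    have "(2::real) ^ n * (1 / 8) ^ n = (2 * (1 / 8)) ^ n" by (rule power_mult_distrib[symmetric])
    also have "(2::real) * (1 / 8) = 1 / 4" by simp
    finally show ?thesis by (simp add: power_one_over)
  qed
  finally show ?thesis using MB by (simp add: p_def)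
qed

theorem mainTheorem3:
  fixes \<epsilon> :: real
  assumes "0 < \<epsilon>" and "\<epsilon> < 1"
  shows "\<exists>\<kappa>'>0. (\<lambda>n. measure_pmf.prob (random_vertex_set n ((1 - \<epsilon>) / real n))
                     {S. components_bounded n S (\<kappa>' * real n)}) \<longlonglongrightarrow> 1"
proof -
  define q where "q = (1 - \<epsilon>) * exp \<epsilon>"
  have q0: "0 < q" using assms by (simp add: q_def)
  have "1 - \<epsilon> < exp (- \<epsilon>)" using assms exp_minus_greater[of \<epsilon>] by simp
  hence "(1 - \<epsilon>) * exp \<epsilon> < exp (- \<epsilon>) * exp \<epsilon>" by (intro mult_strict_right_mono) auto
  moreover have "exp (- \<epsilon>) * exp \<epsilon> = 1" by (simp add: exp_add[symmetric])
  ultimately have q1: "q < 1" by (simp add: q_def)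
  have lnq: "ln q < 0" using q0 q1 by simp
  define \<kappa> where "\<kappa> = 3 * ln 2 / (- ln q)"
  have k0: "0 < \<kappa>" unfolding \<kappa>_def using lnq by (intro divide_pos_pos) auto
  have "q powr \<kappa> = exp (\<kappa> * ln q)" using q0 by (simp add: powr_def)
  also have "\<kappa> * ln q = - (real 3 * ln 2)" using lnq by (simp add: \<kappa>_def field_simps)
  also have "exp (- (real 3 * ln 2)) = 1 / 8"
    by (simp add: exp_minus exp_of_nat_mult inverse_eq_divide del: of_nat_numeral)
  finally have qk: "q powr \<kappa> = 1 / 8" .
  define B where "B n = exp \<epsilon> / q * (real n * (\<kappa> * real n + 1) + 1) / 4 ^ n" for n :: nat
  have Blim: "(\<lambda>n. 1 - B n) \<longlonglongrightarrow> 1 - 0"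
    by (intro tendsto_diff tendsto_const) (unfold B_def, real_asymp)
  define P where "P n = measure_pmf.prob (random_vertex_set n ((1 - \<epsilon>) / real n))
                     {S. components_bounded n S (\<kappa> * real n)}" for n
  have low: "1 - B n \<le> P n" if "1 \<le> n" for n
  proof -
    have "P n = 1 - measure_pmf.prob (random_vertex_set n ((1 - \<epsilon>) / real n))
                     {S. \<not> components_bounded n S (\<kappa> * real n)}"
      unfolding P_def
      using measure_pmf.prob_compl[of "{S. \<not> components_bounded n S (\<kappa> * real n)}"
             "random_vertex_set n ((1 - \<epsilon>) / real n)"]
      by (simp add: Compl_eq_Diff_UNIV[symmetric] Collect_neg_eq[symmetric])
    thus ?thesis using final_bound[OF assms q_def q0 q1 k0 qk that] by (simp add: B_def)
  qed
  have "P \<longlonglongrightarrow> 1"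
  proof (rule tendsto_sandwich[of "\<lambda>n. 1 - B n" P sequentially "\<lambda>n. 1"])
    show "\<forall>\<^sub>F n in sequentially. 1 - B n \<le> P n"
      using low by (intro eventually_sequentiallyI[of 1]) auto
    show "\<forall>\<^sub>F n in sequentially. P n \<le> 1" by (simp add: P_def)
    show "(\<lambda>n. 1 - B n) \<longlonglongrightarrow> 1" using Blim by simp
  qed simp
  thus ?thesis using k0 unfolding P_def by blast
qed

end
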